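(* Let $G$ be a finite group of full exponent. Then the co-prime graph $\Gamma_{CP}(G)$ is minimally edge connected if and only if $G$ is a $p$-group for some prime $p$.
   Context: The co-prime graph $\Gamma_{CP}(G)$ of a finite group $G$ is the simple undirected graph with vertex set $G$ in which two distinct elements $x,y$ are adjacent if and only if $\gcd(o(x),o(y))=1$. $G$ is of full exponent if it contains an element whose order equals the exponent of $G$. A $p$-group is a group of order $p^n$ for a prime $p$. For a connected graph $\Gamma$, an edge cut-set is a set $S$ of edges such that $\Gamma-S$ is disconnected or has just one vertex, and the edge connectivity $\kappa'(\Gamma)$ is the smallest size of an edge cut-set. $\Gamma$ is minimally edge connected if $\kappa'(\Gamma-\epsilon)=\kappa'(\Gamma)-1$ for every edge $\epsilon$ of $\Gamma$. *)

theory Defs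
  imports "HOL-Algebra.Multiplicative_Group" "HOL-Computational_Algebra.Primes"
begin

text \<open>Simple undirected graphs given by a vertex set V and a set E of
  2-element subsets of V (edges).\<close>

definition graph_connected :: "'a set \<Rightarrow> 'a set set \<Rightarrow> bool" where
  "graph_connected V E \<longleftrightarrow> V \<noteq> {} \<and>
     (\<forall>x\<in>V. \<forall>y\<in>V. (\<lambda>u v. {u, v} \<in> E)\<^sup>*\<^sup>* x y)"

definition edge_cut_set :: "'a set \<Rightarrow> 'a set set \<Rightarrow> 'a set set \<Rightarrow> bool" where
  "edge_cut_set V E S \<longleftrightarrow> S \<subseteq> E \<and>
     (\<not> graph_connected V (E - S) \<or> card V = 1)"

definition edge_connectivity :: "'a set \<Rightarrow> 'a set set \<Rightarrow> nat" where
  "edge_connectivity V E = (LEAST k. \<exists>S. edge_cut_set V E S \<and> card S = k)"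

definition minimally_edge_connected :: "'a set \<Rightarrow> 'a set set \<Rightarrow> bool" where
  "minimally_edge_connected V E \<longleftrightarrow>
     (\<forall>e\<in>E. edge_connectivity V (E - {e}) = edge_connectivity V E - 1)"

definition coprime_graph_edges :: "('a, 'b) monoid_scheme \<Rightarrow> 'a set set" where
  "coprime_graph_edges G = {{x, y} | x y. x \<in> carrier G \<and> y \<in> carrier G \<and> x \<noteq> y \<and>
       gcd (group.ord G x) (group.ord G y) = 1}"

definition group_exponent :: "('a, 'b) monoid_scheme \<Rightarrow> nat" where
  "group_exponent G = Lcm (group.ord G ` carrier G)"

definition full_exponent :: "('a, 'b) monoid_scheme \<Rightarrow> bool" where
  "full_exponent G \<longleftrightarrow> (\<exists>x\<in>carrier G. group.ord G x = group_exponent G)"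

definition p_group :: "('a, 'b) monoid_scheme \<Rightarrow> nat \<Rightarrow> bool" where
  "p_group G p \<longleftrightarrow> prime p \<and> (\<exists>n. order G = p ^ n)"

end

theory Submission
  imports Defs "HOL-Algebra.Sylow"
begin

lemma rtranclp_empty_rel: "(\<lambda>u v. {u, v} \<in> ({}::'a set set))\<^sup>*\<^sup>* x y \<Longrightarrow> x = y"
  by (induction rule: rtranclp_induct) auto

lemma isolated_not_connected:
  assumes "x \<in> V" "y \<in> V" "x \<noteq> y" "\<And>z. {x, z} \<notin> E"
  shows "\<not> graph_connected V E"
proof
  assume "graph_connected V E"
  then have "(\<lambda>u v. {u, v} \<in> E)\<^sup>*\<^sup>* x y" using assms unfolding graph_connected_def by blast
  then show False
  proof (cases rule: converse_rtranclpE)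
    case base then show ?thesis using assms by simp
  next
    case (step z) then show ?thesis using assms(4) by blast
  qed
qed

lemma star_connected:
  assumes "c \<in> V" "\<And>v. v \<in> V \<Longrightarrow> v \<noteq> c \<Longrightarrow> {c, v} \<in> E"
  shows "graph_connected V E"
proof -
  let ?r = "\<lambda>u v. {u, v} \<in> E"
  have a: "?r\<^sup>*\<^sup>* c v" if "v \<in> V" for v
  proof (cases "v = c")
    case False
    then have "{c, v} \<in> E" using assms that by blast
    then show ?thesis by auto
  qed simp
  have b: "?r\<^sup>*\<^sup>* v c" if "v \<in> V" for v
  proof (cases "v = c")
    case False
    then have "{v, c} \<in> E" using assms that by (metis insert_commute)
    then show ?thesis by auto
  qed simp
  show ?thesis unfolding graph_connected_def using assms(1) a b
    by (meson rtranclp_trans equals0D)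
qed

lemma ec_le_card:
  assumes "edge_cut_set V E S"
  shows "edge_connectivity V E \<le> card S"
  unfolding edge_connectivity_def by (rule Least_le) (use assms in blast)

lemma ec_zero:
  assumes "\<not> graph_connected V E"
  shows "edge_connectivity V E = 0"
  unfolding edge_connectivity_def
  by (rule Least_eq_0) (rule exI[of _ "{}"], simp add: edge_cut_set_def assms)

lemma ec_pos:
  assumes "graph_connected V E" "finite E" "x \<in> V" "y \<in> V" "x \<noteq> y"
  shows "edge_connectivity V E \<noteq> 0"
proof
  assume h: "edge_connectivity V E = 0"
  have cV: "card V \<noteq> 1"
  proof
    assume "card V = 1"
    then obtain a where "V = {a}" by (auto simp: card_Suc_eq)
    then show False using assms by auto
  qed
  have ex: "\<exists>S. edge_cut_set V E S \<and> card S = card E"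
  proof (intro exI conjI)
    show "edge_cut_set V E E"
    proof -
      have "\<not> graph_connected V (E - E)"
        using rtranclp_empty_rel[of x y] assms(3-5) unfolding graph_connected_def by auto
      then show ?thesis unfolding edge_cut_set_def by simp
    qed
  qed simp
  from ex obtain k where "\<exists>S. edge_cut_set V E S \<and> card S = k" by blast
  then have "\<exists>S. edge_cut_set V E S \<and> card S = edge_connectivity V E"
    unfolding edge_connectivity_def by (rule LeastI)
  then obtain S where S: "edge_cut_set V E S" "card S = 0" using h by auto
  then have "S \<subseteq> E" by (simp add: edge_cut_set_def)
  then have "finite S" using assms(2) finite_subset by blast
  then have "S = {}" using S(2) by simp
  then show False using S(1) cV assms(1) by (simp add: edge_cut_set_def)
qed

lemma cg_edge_D:
  assumes "{u, v} \<in> coprime_graph_edges G"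
  shows "u \<noteq> v \<and> u \<in> carrier G \<and> v \<in> carrier G \<and> gcd (group.ord G u) (group.ord G v) = 1"
proof -
  obtain a b where ab: "{u, v} = {a, b}" "a \<in> carrier G" "b \<in> carrier G" "a \<noteq> b"
      "gcd (group.ord G a) (group.ord G b) = 1"
    using assms unfolding coprime_graph_edges_def by auto
  then have "(u = a \<and> v = b) \<or> (u = b \<and> v = a)" using ab(1) doubleton_eq_iff[of u v a b] by blast
  then show ?thesis
  proof
    assume "u = a \<and> v = b" then show ?thesis using ab by simp
  next
    assume "u = b \<and> v = a" then show ?thesis using ab by (simp add: ac_simps)
  qed
qed

lemma cg_edge_I:
  assumes "u \<noteq> v" "u \<in> carrier G" "v \<in> carrier G" "gcd (group.ord G u) (group.ord G v) = 1"
  shows "{u, v} \<in> coprime_graph_edges G"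
  unfolding coprime_graph_edges_def
  by (rule CollectI, rule exI[of _ u], rule exI[of _ v]) (simp add: assms)

lemma cg_finite:
  assumes "finite (carrier G)"
  shows "finite (coprime_graph_edges G)"
proof -
  have "coprime_graph_edges G \<subseteq> Pow (carrier G)"
    unfolding coprime_graph_edges_def by auto
  then show ?thesis using assms by (meson finite_Pow_iff finite_subset)
qed


lemma (in group) elem_of_prime_order:
  assumes fin: "finite (carrier G)" and q: "prime q" "q dvd order G"
  shows "\<exists>h\<in>carrier G. ord h = q"
proof -
  obtain m where m: "order G = q ^ 1 * m" using q by auto
  obtain H where H: "subgroup H G" "card H = q"
    using sylow_thm[OF q(1) is_group m fin] by auto
  have "card H \<ge> 2" using H q prime_ge_2_nat by auto
  moreover have "\<not> H \<subseteq> {\<one>}"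
  proof
    assume "H \<subseteq> {\<one>}"
    then have "card H \<le> card {\<one>}" by (rule card_mono[rotated]) simp
    then show False using \<open>card H \<ge> 2\<close> by simp
  qed
  then obtain h where h: "h \<in> H" "h \<noteq> \<one>" by blast
  have hc: "h \<in> carrier G" using H(1) h(1) subgroup.subset by blast
  interpret Hg: group "G\<lparr>carrier := H\<rparr>" using H(1) subgroup.subgroup_is_group is_group by blast
  have "h [^]\<^bsub>G\<lparr>carrier := H\<rparr>\<^esub> (order (G\<lparr>carrier := H\<rparr>)) = \<one>\<^bsub>G\<lparr>carrier := H\<rparr>\<^esub>"
    using Hg.pow_order_eq_1 h(1) by simp
  then have "h [^] q = \<one>" using H(2) by (simp add: nat_pow_def order_def)
  then have "ord h dvd q" using hc pow_eq_id by blast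
  moreover have "ord h \<noteq> 1" using hc h(2) ord_eq_1 by blast
  ultimately have "ord h = q" using q(1) by (meson prime_nat_iff)
  then show ?thesis using hc by blast
qed

lemma primepow_dvd_ne1:
  fixes p m n :: nat
  assumes "prime p" "m dvd p ^ n" "m \<noteq> 1"
  shows "p dvd m"
proof -
  obtain i where "m = p ^ i" using assms(1,2) divides_primepow_nat by blast
  then show ?thesis using assms(3) by (cases i) auto
qed

theorem mainTheorem11:
  fixes G :: "('a, 'b) monoid_scheme"
  assumes "group G" and "finite (carrier G)" and "full_exponent G"
  shows "minimally_edge_connected (carrier G) (coprime_graph_edges G)
           \<longleftrightarrow> (\<exists>p. p_group G p)"
proof -
  interpret group G by (rule assms(1))
  note fin = assms(2)
  have finE: "finite (coprime_graph_edges G)" using cg_finite[OF fin] .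
  show ?thesis
  proof
    assume mec: "minimally_edge_connected (carrier G) (coprime_graph_edges G)"
    show "\<exists>p. p_group G p"
    proof (rule ccontr)
      assume np: "\<not> (\<exists>p. p_group G p)"
      have o0: "order G \<noteq> 0" using order_gt_0_iff_finite fin by simp
      have n1: "order G \<noteq> 1"
      proof
        assume "order G = 1"
        then have "p_group G 2" unfolding p_group_def by (metis power_0 two_is_prime_nat)
        then show False using np by blast
      qed
      obtain p :: nat where p: "prime p" "p dvd order G" using prime_factor_nat[OF n1] by auto
      obtain y where y: "order G = p ^ multiplicity p (order G) * y" "\<not> p dvd y"
        by (rule multiplicity_decompose'[of "order G" p]) (use o0 p(1) not_prime_unit in auto)
      have "y \<noteq> 1"
      proof
        assume "y = 1"
        then have "p_group G p" unfolding p_group_def using p y(1) by auto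
        then show False using np by blast
      qed
      then obtain q :: nat where q: "prime q" "q dvd y" using prime_factor_nat by auto
      have qp: "q \<noteq> p" using q y(2) by blast
      have qG: "q dvd order G" using q(2) y(1) by (metis dvd_mult)
      obtain a where a: "a \<in> carrier G" "ord a = p" using elem_of_prime_order[OF fin p] by auto
      obtain b where b: "b \<in> carrier G" "ord b = q" using elem_of_prime_order[OF fin q(1) qG] by auto
      have gab: "gcd (ord a) (ord b) = 1" using a b primes_coprime[OF p(1) q(1)] qp
        by (simp add: coprime_iff_gcd_eq_1)
      have ab: "a \<noteq> b" using a b qp by auto
      have a1: "a \<noteq> \<one>\<^bsub>G\<^esub>" using a p(1) ord_eq_1 by force
      have b1: "b \<noteq> \<one>\<^bsub>G\<^esub>" using b q(1) ord_eq_1 by force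
      define e where "e = {a, b}"
      have eE: "e \<in> coprime_graph_edges G" unfolding e_def by (rule cg_edge_I[OF ab a(1) b(1) gab])
      obtain x where x: "x \<in> carrier G" "ord x = group_exponent G"
        using assms(3) unfolding full_exponent_def by blast
      have dvdx: "ord z dvd ord x" if "z \<in> carrier G" for z
        using that x(2) unfolding group_exponent_def by (simp add: dvd_Lcm)
      have x1: "x \<noteq> \<one>\<^bsub>G\<^esub>"
      proof
        assume "x = \<one>\<^bsub>G\<^esub>"
        then have "ord x = 1" by simp
        then show False using dvdx[OF a(1)] a(2) p(1) by auto
      qed
      define f where "f = {\<one>\<^bsub>G\<^esub>, x}"
      have fE: "f \<in> coprime_graph_edges G" unfolding f_def
        using cg_edge_I[of "\<one>\<^bsub>G\<^esub>" x G] x1 x(1) by simp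
      have iso: "{x, z} \<notin> coprime_graph_edges G - {f}" for z
      proof
        assume "{x, z} \<in> coprime_graph_edges G - {f}"
        then have h: "{x, z} \<in> coprime_graph_edges G" "{x, z} \<noteq> f" by auto
        from cg_edge_D[OF h(1)] have z: "z \<in> carrier G" "gcd (ord x) (ord z) = 1" by auto
        then have "ord z = 1" using dvdx[OF z(1)] by (metis gcd.commute gcd_nat.absorb_iff1)
        then have "z = \<one>\<^bsub>G\<^esub>" using ord_eq_1 z(1) by blast
        then show False using h(2) unfolding f_def by (simp add: insert_commute)
      qed
      have nc: "\<not> graph_connected (carrier G) (coprime_graph_edges G - {f})"
        by (rule isolated_not_connected[OF x(1) one_closed x1]) (rule iso)
      have le1: "edge_connectivity (carrier G) (coprime_graph_edges G) \<le> 1"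
      proof -
        have "edge_cut_set (carrier G) (coprime_graph_edges G) {f}"
          unfolding edge_cut_set_def using fE nc by auto
        from ec_le_card[OF this] show ?thesis by simp
      qed
      have conn: "graph_connected (carrier G) (coprime_graph_edges G - {e})"
      proof (rule star_connected[OF one_closed])
        fix v assume v: "v \<in> carrier G" "v \<noteq> \<one>\<^bsub>G\<^esub>"
        have "{\<one>\<^bsub>G\<^esub>, v} \<in> coprime_graph_edges G" using cg_edge_I[of "\<one>\<^bsub>G\<^esub>" v G] v by simp
        moreover have "{\<one>\<^bsub>G\<^esub>, v} \<noteq> e" unfolding e_def using a1 b1 by auto
        ultimately show "{\<one>\<^bsub>G\<^esub>, v} \<in> coprime_graph_edges G - {e}" by simp
      qed
      have "edge_connectivity (carrier G) (coprime_graph_edges G - {e}) \<noteq> 0"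
        using ec_pos[OF conn _ x(1) one_closed x1] finE by simp
      moreover have "edge_connectivity (carrier G) (coprime_graph_edges G - {e}) =
          edge_connectivity (carrier G) (coprime_graph_edges G) - 1"
        using mec eE unfolding minimally_edge_connected_def by blast
      ultimately show False using le1 by simp
    qed
  next
    assume "\<exists>p. p_group G p"
    then obtain p n where p: "prime p" "order G = p ^ n" unfolding p_group_def by blast
    have pdvd: "p dvd ord z" if "z \<in> carrier G" "z \<noteq> \<one>\<^bsub>G\<^esub>" for z
    proof -
      have "ord z dvd p ^ n" using ord_dvd_group_order[OF that(1)] p(2) by simp
      moreover have "ord z \<noteq> 1" using that ord_eq_1 by blast
      ultimately show ?thesis using primepow_dvd_ne1[OF p(1)] by blast
    qed
    have nco: "z = \<one>\<^bsub>G\<^esub> \<or> w = \<one>\<^bsub>G\<^esub>" if "z \<in> carrier G" "w \<in> carrier G" "gcd (ord z) (ord w) = 1" for z w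
    proof (rule ccontr)
      assume "\<not> (z = \<one>\<^bsub>G\<^esub> \<or> w = \<one>\<^bsub>G\<^esub>)"
      then have "p dvd gcd (ord z) (ord w)" using pdvd that(1,2) by (simp add: gcd_greatest)
      then show False using that(3) p(1) by simp
    qed
    show "minimally_edge_connected (carrier G) (coprime_graph_edges G)"
      unfolding minimally_edge_connected_def
    proof
      fix e assume eE: "e \<in> coprime_graph_edges G"
      then obtain u v where uv: "e = {u, v}" "u \<in> carrier G" "v \<in> carrier G" "u \<noteq> v"
        "gcd (ord u) (ord v) = 1" unfolding coprime_graph_edges_def by auto
      have ex: "\<exists>w. e = {\<one>\<^bsub>G\<^esub>, w} \<and> w \<in> carrier G \<and> w \<noteq> \<one>\<^bsub>G\<^esub>"
      proof (cases "u = \<one>\<^bsub>G\<^esub>")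
        case True
        have h1: "e = {\<one>\<^bsub>G\<^esub>, v}" using uv(1) True by (simp only:)
        have h2: "v \<noteq> \<one>\<^bsub>G\<^esub>" using uv(4) True by metis
        show ?thesis using h1 uv(3) h2 by auto
      next
        case False
        then have "v = \<one>\<^bsub>G\<^esub>" using nco[OF uv(2) uv(3) uv(5)] by simp
        then have h1: "e = {\<one>\<^bsub>G\<^esub>, u}" using uv(1) by (metis insert_commute)
        show ?thesis using h1 uv(2) False by auto
      qed
      from ex obtain w where w: "e = {\<one>\<^bsub>G\<^esub>, w}" "w \<in> carrier G" "w \<noteq> \<one>\<^bsub>G\<^esub>"
        by (elim exE conjE)
      have iso: "{w, z} \<notin> coprime_graph_edges G - {e}" for z
      proof
        assume "{w, z} \<in> coprime_graph_edges G - {e}"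
        then have h: "{w, z} \<in> coprime_graph_edges G" "{w, z} \<noteq> e" by auto
        from cg_edge_D[OF h(1)] have z: "z \<in> carrier G" "gcd (ord w) (ord z) = 1" by auto
        then have "z = \<one>\<^bsub>G\<^esub>" using nco[OF w(2) z(1) z(2)] w(3) by simp
        then show False using h(2) w(1) by (simp add: insert_commute)
      qed
      have nc: "\<not> graph_connected (carrier G) (coprime_graph_edges G - {e})"
        by (rule isolated_not_connected[OF w(2) one_closed w(3)]) (rule iso)
      have z: "edge_connectivity (carrier G) (coprime_graph_edges G - {e}) = 0"
        using ec_zero[OF nc] .
      have "edge_cut_set (carrier G) (coprime_graph_edges G) {e}"
        unfolding edge_cut_set_def using eE nc by auto
      from ec_le_card[OF this] have "edge_connectivity (carrier G) (coprime_graph_edges G) \<le> 1"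
        by simp
      then show "edge_connectivity (carrier G) (coprime_graph_edges G - {e}) =
          edge_connectivity (carrier G) (coprime_graph_edges G) - 1" using z by simp
    qed
  qed
qed

end
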